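(* Let $0\le\mu<L<\infty$, $q=\mu/L$, $f\in\mathcal{F}_{\mu,L}(\mathbb{R}^d)$ with a minimizer $x_\star$ and $f_\star=f(x_\star)$, and let $k\ge 0$. For any $y_{k-1},z_k\in\mathbb{R}^d$ and any $A_k\ge 0$, define $x_k=y_{k-1}-\frac1L\nabla f(y_{k-1})$, $A_{k+1}=\frac{(1+q)A_k+2\left(1+\sqrt{(1+A_k)(1+qA_k)}\right)}{(1-q)^2}$, $\beta_k=\frac{A_k}{(1-q)A_{k+1}}$, $\delta_k=\frac12\frac{(1-q)^2A_{k+1}-(1+q)A_k}{1+q+qA_k}$, $y_k=(1-\beta_k)z_k+\beta_k x_k$, and $z_{k+1}=(1-q\delta_k)z_k+q\delta_k y_k-\frac{\delta_k}{L}\nabla f(y_k)$. Then $\phi_{k+1}\le\phi_k$, where for $j\in\{k,k+1\}$ \[ \phi_j=(1-q)A_j\left[f(y_{j-1})-f_\star-\tfrac{1}{2L}\|\nabla f(y_{j-1})\|^2-\tfrac{\mu}{2(1-\mu/L)}\|y_{j-1}-\tfrac1L\nabla f(y_{j-1})-x_\star\|^2\right]+(L+\mu A_j)\|z_j-x_\star\|^2 . \]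
   Context: $\mathcal{F}_{\mu,L}(\mathbb{R}^d)$ denotes the set of proper closed convex functions $f:\mathbb{R}^d\to\mathbb{R}$ such that for all $x,y$: $f(x)\le f(y)+\langle\nabla f(y);x-y\rangle+\frac L2\|x-y\|^2$ and $f(x)\ge f(y)+\langle\nabla f(y);x-y\rangle+\frac\mu2\|x-y\|^2$. *)

theory Defs
  imports "HOL-Analysis.Analysis"
begin

text \<open>The class F_{mu,L}(R^d): f is differentiable with gradient g (so g = nabla f),
  and satisfies the L-smoothness upper bound and the mu-strong convexity lower bound.
  (With mu >= 0 the lower bound gives convexity; a real-valued differentiable function
  on R^d is automatically proper and closed.)\<close>
definition in_F :: "real \<Rightarrow> real \<Rightarrow> ('a::euclidean_space \<Rightarrow> real) \<Rightarrow> ('a \<Rightarrow> 'a) \<Rightarrow> bool" where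
  "in_F \<mu> L f g \<longleftrightarrow>
     (\<forall>x. (f has_derivative (\<lambda>h. g x \<bullet> h)) (at x)) \<and>
     (\<forall>x y. f x \<le> f y + g y \<bullet> (x - y) + L / 2 * (norm (x - y))\<^sup>2) \<and>
     (\<forall>x y. f x \<ge> f y + g y \<bullet> (x - y) + \<mu> / 2 * (norm (x - y))\<^sup>2)"

text \<open>Potential phi_j, with arguments A = A_j, yp = y_{j-1}, z = z_j.\<close>
definition phi :: "real \<Rightarrow> real \<Rightarrow> ('a::euclidean_space \<Rightarrow> real) \<Rightarrow> ('a \<Rightarrow> 'a) \<Rightarrow> 'a
                   \<Rightarrow> real \<Rightarrow> 'a \<Rightarrow> 'a \<Rightarrow> real" where
  "phi \<mu> L f g xs A yp z =
     (1 - \<mu>/L) * A * (f yp - f xs - 1 / (2 * L) * (norm (g yp))\<^sup>2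
        - \<mu> / (2 * (1 - \<mu>/L)) * (norm (yp - (1/L) *\<^sub>R g yp - xs))\<^sup>2)
     + (L + \<mu> * A) * (norm (z - xs))\<^sup>2"

end

theory Submission
  imports Defs
begin

lemma keyQ:
  fixes e v k p :: "'a::real_inner" and q B b d :: real
  assumes R2: "2*d*(1+q*B) = (1+q)*B - (1-q)*b*B"
    and R3: "d\<^sup>2*(1+q*B) = B"
  shows "2*(1-q) * ((1-q)*B*(- 1/2*(norm k)\<^sup>2) - q*B/2*(norm ((e + b*\<^sub>R v) - k))\<^sup>2)
     + 2*(1-q) * (1+q*B)*(norm (e + (q*d*b)*\<^sub>R v - d*\<^sub>R k))\<^sup>2
     - 2*(1-q) * ((1-q)*((1-q)*b*B)*(- 1/2*(norm p)\<^sup>2) - q*((1-q)*b*B)/2*(norm (e + v))\<^sup>2 + (1+q*((1-q)*b*B))*(norm e)\<^sup>2)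
     + 2*(1-q) * (1-q)*((1-q)*b*B)*(- inner k (e + v + p - (e + b*\<^sub>R v)) - q/2*(norm (e + v + p - (e + b*\<^sub>R v)))\<^sup>2)
     - (1-q)*((1-q)*b*B)*(norm (p - k - q*\<^sub>R (e + v + p - (e + b*\<^sub>R v))))\<^sup>2
     + 2*(1-q) * (1-q)*(B-(1-q)*b*B)*(inner k (e + b*\<^sub>R v) - q/2*(norm (e + b*\<^sub>R v))\<^sup>2)
     - (1-q)*(B-(1-q)*b*B)*(norm (k - q*\<^sub>R (e + b*\<^sub>R v)))\<^sup>2 = 0"
  apply (simp only: power2_norm_eq_inner inner_add_left inner_add_right inner_diff_left inner_diff_right inner_scaleR_left inner_scaleR_right)
  apply (simp add: inner_commute algebra_simps)
  using R2 R3 apply algebra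
  done

lemma rels:
  fixes q A B s d :: real
  assumes q: "0 \<le> q" "q < 1" and A: "0 \<le> A"
    and s: "s\<^sup>2 = (1+A)*(1+q*A)"
    and B: "(1-q)\<^sup>2 * B = (1+q)*A + 2 + 2 * s"
    and d: "d * (1+q+q*A) = 1 + s"
  shows "2*d*(1+q*B) = (1+q)*B - A" and "d\<^sup>2*(1+q*B) = B"
proof -
  have pos: "1+q+q*A > 0" using q A by (smt (verit) mult_nonneg_nonneg)
  define u where "u = 1/(1-q)"
  define w where "w = 1/(1+q+q*A)"
  have u: "(1-q)*u = 1" unfolding u_def using q by simp
  have w: "(1+q+q*A)*w = 1" unfolding w_def using pos by simp
  show "2*d*(1+q*B) = (1+q)*B - A" using s B d u w unfolding power2_eq_square by algebra
  show "d\<^sup>2*(1+q*B) = B" using s B d u w unfolding power2_eq_square by algebra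
qed

lemma fin2:
  fixes L q A B fk fs fp nk nYk nZ np nw ne ik nu nI1 iY nY nI2 :: real
  assumes L: "L > 0" and q: "q < 1" and A: "0 \<le> A" and AB: "A \<le> B"
    and I1: "0 \<le> fp - fk - L*ik - q*L/2*nu - L/(2*(1-q))*nI1"
    and I2: "0 \<le> fs - fk + L*iY - q*L/2*nY - L/(2*(1-q))*nI2"
    and KQ: "2*(1-q)*((1-q)*B*(- 1/2*nk) - q*B/2*nYk) + 2*(1-q)*(1+q*B)*nZ
       - 2*(1-q)*((1-q)*A*(- 1/2*np) - q*A/2*nw + (1+q*A)*ne)
       + 2*(1-q)*(1-q)*A*(- ik - q/2*nu) - (1-q)*A*nI1
       + 2*(1-q)*(1-q)*(B-A)*(iY - q/2*nY) - (1-q)*(B-A)*nI2 = 0"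
  shows "(1-q)*B*(fk - fs - L/2*nk - q*L/(2*(1-q))*nYk) + (L+q*L*B)*nZ
      \<le> (1-q)*A*(fp - fs - L/2*np - q*L/(2*(1-q))*nw) + (L+q*L*A)*ne"
proof -
  have q1: "1 - q \<noteq> 0" using q by simp
  define c where "c = 1/(1-q)"
  have cq: "(1-q)*c = 1" unfolding c_def using q1 by simp
  have f1: "L/(2*(1-q)) = L*c/2" unfolding c_def by simp
  have f2: "q*L/(2*(1-q)) = q*L*c/2" unfolding c_def by simp
  have eq: "(1-q)*A*(fp - fs - L/2*np - q*L/(2*(1-q))*nw) + (L+q*L*A)*ne
     - ((1-q)*B*(fk - fs - L/2*nk - q*L/(2*(1-q))*nYk) + (L+q*L*B)*nZ)
     = (1-q)*A*(fp - fk - L*ik - q*L/2*nu - L/(2*(1-q))*nI1)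
       + (1-q)*(B-A)*(fs - fk + L*iY - q*L/2*nY - L/(2*(1-q))*nI2)
       - L/(2*(1-q)) * (2*(1-q)*((1-q)*B*(- 1/2*nk) - q*B/2*nYk) + 2*(1-q)*(1+q*B)*nZ
       - 2*(1-q)*((1-q)*A*(- 1/2*np) - q*A/2*nw + (1+q*A)*ne)
       + 2*(1-q)*(1-q)*A*(- ik - q/2*nu) - (1-q)*A*nI1
       + 2*(1-q)*(1-q)*(B-A)*(iY - q/2*nY) - (1-q)*(B-A)*nI2)"
    unfolding f1 f2 using cq by algebra
  have "0 \<le> (1-q)*A*(fp - fk - L*ik - q*L/2*nu - L/(2*(1-q))*nI1)"
    using I1 q A by simp
  moreover have "0 \<le> (1-q)*(B-A)*(fs - fk + L*iY - q*L/2*nY - L/(2*(1-q))*nI2)"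
    using I2 q AB by simp
  ultimately show ?thesis using eq unfolding KQ by simp
qed

lemma interp:
  fixes f :: "'a::euclidean_space \<Rightarrow> real" and g :: "'a \<Rightarrow> 'a"
  assumes m: "0 \<le> \<mu>" "\<mu> < L" and F: "in_F \<mu> L f g"
  shows "f x \<ge> f y + g y \<bullet> (x - y) + \<mu>/2 * (norm (x - y))\<^sup>2
           + 1/(2*(L-\<mu>)) * (norm (g x - g y - \<mu> *\<^sub>R (x - y)))\<^sup>2"
proof -
  define D where "D = g x - g y - \<mu> *\<^sub>R (x - y)"
  define c where "c = 1/(L-\<mu>)"
  have c: "c * (L - \<mu>) = 1" unfolding c_def using m by auto
  define w where "w = x - c *\<^sub>R D"
  have up: "f w \<le> f x + g x \<bullet> (w - x) + L / 2 * (norm (w - x))\<^sup>2"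
    using F unfolding in_F_def by blast
  have lo: "f w \<ge> f y + g y \<bullet> (w - y) + \<mu> / 2 * (norm (w - y))\<^sup>2"
    using F unfolding in_F_def by blast
  have eq: "f x + g x \<bullet> (w - x) + L / 2 * (norm (w - x))\<^sup>2
     - (f y + g y \<bullet> (w - y) + \<mu> / 2 * (norm (w - y))\<^sup>2)
     = f x - (f y + g y \<bullet> (x - y) + \<mu>/2 * (norm (x - y))\<^sup>2
           + c/2 * (norm D)\<^sup>2)"
    unfolding w_def D_def
    apply (simp only: power2_norm_eq_inner inner_add_left inner_add_right inner_diff_left inner_diff_right inner_scaleR_left inner_scaleR_right)
    apply (simp add: inner_commute algebra_simps)
    using c apply algebra
    done
  have "c/2 * (norm D)\<^sup>2 = 1/(2*(L-\<mu>)) * (norm D)\<^sup>2" unfolding c_def by simp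
  then show ?thesis using up lo eq unfolding D_def[symmetric] by linarith
qed

lemma grad_zero:
  fixes f :: "'a::euclidean_space \<Rightarrow> real" and g :: "'a \<Rightarrow> 'a"
  assumes m: "0 \<le> \<mu>" "\<mu> < L" and F: "in_F \<mu> L f g" and mn: "\<forall>x. f xs \<le> f x"
  shows "g xs = 0"
proof -
  have L: "L > 0" using m by auto
  let ?w = "xs - (1/L) *\<^sub>R g xs"
  have up: "f ?w \<le> f xs + g xs \<bullet> (?w - xs) + L / 2 * (norm (?w - xs))\<^sup>2"
    using F unfolding in_F_def by blast
  have "g xs \<bullet> (?w - xs) + L / 2 * (norm (?w - xs))\<^sup>2 = - (norm (g xs))\<^sup>2 / (2*L)"
    using L by (simp add: field_simps power2_eq_square inner_commute) (metis power2_eq_square power2_norm_eq_inner)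
  moreover have "f xs \<le> f ?w" using mn by blast
  ultimately have "(norm (g xs))\<^sup>2 / (2*L) \<le> 0" using up by linarith
  hence "(norm (g xs))\<^sup>2 \<le> 0" using L by (simp add: divide_le_0_iff)
  thus ?thesis by simp
qed

lemma fin: "(a::real) + b - c + d + e = 0 \<Longrightarrow> 0 \<le> d \<Longrightarrow> 0 \<le> e \<Longrightarrow> a + b \<le> c"
  by linarith

theorem lemma1:
  fixes f :: "'a::euclidean_space \<Rightarrow> real" and g :: "'a \<Rightarrow> 'a"
    and \<mu> L q A\<^sub>k :: real and x\<^sub>s y\<^sub>p z\<^sub>k :: 'a
  assumes "0 \<le> \<mu>" and "\<mu> < L"
    and "q = \<mu> / L"
    and "in_F \<mu> L f g"
    and "\<forall>x. f x\<^sub>s \<le> f x"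
    and "0 \<le> A\<^sub>k"
  defines "x\<^sub>k \<equiv> y\<^sub>p - (1/L) *\<^sub>R g y\<^sub>p"
    and "A\<^sub>k\<^sub>1 \<equiv> ((1 + q) * A\<^sub>k + 2 * (1 + sqrt ((1 + A\<^sub>k) * (1 + q * A\<^sub>k)))) / (1 - q)\<^sup>2"
  defines "\<beta> \<equiv> A\<^sub>k / ((1 - q) * A\<^sub>k\<^sub>1)"
    and "\<delta> \<equiv> 1/2 * (((1 - q)\<^sup>2 * A\<^sub>k\<^sub>1 - (1 + q) * A\<^sub>k) / (1 + q + q * A\<^sub>k))"
  defines "y\<^sub>k \<equiv> (1 - \<beta>) *\<^sub>R z\<^sub>k + \<beta> *\<^sub>R x\<^sub>k"
  defines "z\<^sub>k\<^sub>1 \<equiv> (1 - q * \<delta>) *\<^sub>R z\<^sub>k + (q * \<delta>) *\<^sub>R y\<^sub>k - (\<delta> / L) *\<^sub>R g y\<^sub>k"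
  shows "phi \<mu> L f g x\<^sub>s A\<^sub>k\<^sub>1 y\<^sub>k z\<^sub>k\<^sub>1 \<le> phi \<mu> L f g x\<^sub>s A\<^sub>k y\<^sub>p z\<^sub>k"
proof -
  note m = assms(1,2)
  have L: "L > 0" using m by auto
  have mu: "\<mu> = q * L" using assms(3) L by simp
  have mq: "\<mu> / L = q" using assms(3) by simp
  have q: "0 \<le> q" "q < 1" using assms(3) m L by (auto simp: divide_less_eq_1_pos)
  define sq where "sq = sqrt ((1 + A\<^sub>k) * (1 + q * A\<^sub>k))"
  have sq0: "sq \<ge> 0" unfolding sq_def using q assms(6) by simp
  have s: "sq\<^sup>2 = (1+A\<^sub>k)*(1+q*A\<^sub>k)" unfolding sq_def using q assms(6) by simp
  have q1: "(1-q)\<^sup>2 > 0" using q by simp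
  have A1: "(1-q)\<^sup>2 * A\<^sub>k\<^sub>1 = (1+q)*A\<^sub>k + 2 + 2 * sq"
    unfolding A\<^sub>k\<^sub>1_def sq_def using q1 by (simp add: field_simps)
  have A1pos: "A\<^sub>k\<^sub>1 > 0"
  proof -
    have "(1+q)*A\<^sub>k \<ge> 0" using q assms(6) by simp
    hence "(1-q)\<^sup>2 * A\<^sub>k\<^sub>1 > 0" using A1 sq0 by linarith
    thus ?thesis using q1 by (simp add: zero_less_mult_iff)
  qed
  have A1ge: "A\<^sub>k\<^sub>1 \<ge> A\<^sub>k"
  proof -
    have qq: "q * q \<le> q * 3" by (rule mult_left_mono) (use q in auto)
    have "(1-q)\<^sup>2 * A\<^sub>k \<le> (1+q)*A\<^sub>k" using q assms(6) qq
      by (intro mult_right_mono) (auto simp: power2_eq_square algebra_simps)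
    hence "(1-q)\<^sup>2 * A\<^sub>k \<le> (1-q)\<^sup>2 * A\<^sub>k\<^sub>1" using A1 sq0 by linarith
    thus ?thesis using q1 by simp
  qed
  have b: "\<beta> * ((1-q)*A\<^sub>k\<^sub>1) = A\<^sub>k" unfolding \<beta>_def using A1pos q by simp
  have d: "\<delta> * (1+q+q*A\<^sub>k) = 1 + sq"
  proof -
    have "1+q+q*A\<^sub>k > 0" using q assms(6) by (smt (verit) mult_nonneg_nonneg)
    thus ?thesis unfolding \<delta>_def A1 by (simp add: field_simps)
  qed
  have R1: "(1-q)*\<beta>*A\<^sub>k\<^sub>1 = A\<^sub>k" using b by (simp add: algebra_simps)
  have R2: "2*\<delta>*(1+q*A\<^sub>k\<^sub>1) = (1+q)*A\<^sub>k\<^sub>1 - (1-q)*\<beta>*A\<^sub>k\<^sub>1"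
    using rels(1)[OF q assms(6) s A1 d] unfolding R1 .
  have R3: "\<delta>\<^sup>2*(1+q*A\<^sub>k\<^sub>1) = A\<^sub>k\<^sub>1" using rels(2)[OF q assms(6) s A1 d] .
  have L0: "L \<noteq> 0" using L by simp
  define k' where "k' = (1/L) *\<^sub>R g y\<^sub>k"
  define p' where "p' = (1/L) *\<^sub>R g y\<^sub>p"
  define e where "e = z\<^sub>k - x\<^sub>s"
  define v where "v = (y\<^sub>p - (1/L) *\<^sub>R g y\<^sub>p - x\<^sub>s) - e"
  have gk: "g y\<^sub>k = L *\<^sub>R k'" unfolding k'_def using L0 by simp
  have gp: "g y\<^sub>p = L *\<^sub>R p'" unfolding p'_def using L0 by simp
  have Yeq: "y\<^sub>k - x\<^sub>s = e + \<beta> *\<^sub>R v"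
    unfolding y\<^sub>k_def x\<^sub>k_def v_def e_def by (simp add: algebra_simps)
  have Zeq: "z\<^sub>k\<^sub>1 - x\<^sub>s = e + (q*\<delta>*\<beta>) *\<^sub>R v - \<delta> *\<^sub>R k'"
  proof -
    have "(\<delta> / L) *\<^sub>R g y\<^sub>k = \<delta> *\<^sub>R k'" unfolding k'_def by simp
    hence "z\<^sub>k\<^sub>1 - x\<^sub>s = (1 - q*\<delta>) *\<^sub>R (z\<^sub>k - x\<^sub>s) + (q*\<delta>) *\<^sub>R (y\<^sub>k - x\<^sub>s) - \<delta> *\<^sub>R k'"
      unfolding z\<^sub>k\<^sub>1_def by (simp add: algebra_simps)
    thus ?thesis unfolding Yeq e_def[symmetric] by (simp add: algebra_simps)
  qed
  have Ueq: "y\<^sub>p - y\<^sub>k = e + v + p' - (e + \<beta> *\<^sub>R v)"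
  proof -
    have "y\<^sub>p - y\<^sub>k = (y\<^sub>p - x\<^sub>s) - (y\<^sub>k - x\<^sub>s)" by simp
    also have "y\<^sub>p - x\<^sub>s = e + v + p'" unfolding v_def p'_def by simp
    finally show ?thesis unfolding Yeq .
  qed
  have gz: "g x\<^sub>s = 0" using grad_zero[OF m assms(4,5)] .
  define Yv where "Yv = e + \<beta> *\<^sub>R v"
  define u where "u = e + v + p' - (e + \<beta> *\<^sub>R v)"
  have c1: "1/(2*(L-\<mu>)) * (L * X)\<^sup>2 = L/(2*(1-q)) * X\<^sup>2" for X
    unfolding mu using L q by (simp add: field_simps power2_eq_square)
  have I1: "0 \<le> f y\<^sub>p - f y\<^sub>k - L*(k' \<bullet> u) - q*L/2*(norm u)\<^sup>2 - L/(2*(1-q))*(norm (p' - k' - q *\<^sub>R u))\<^sup>2"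
  proof -
    have h: "f y\<^sub>k + g y\<^sub>k \<bullet> (y\<^sub>p - y\<^sub>k) + \<mu>/2 * (norm (y\<^sub>p - y\<^sub>k))\<^sup>2
           + 1/(2*(L-\<mu>)) * (norm (g y\<^sub>p - g y\<^sub>k - \<mu> *\<^sub>R (y\<^sub>p - y\<^sub>k)))\<^sup>2 \<le> f y\<^sub>p"
      using interp[OF m assms(4), where x="y\<^sub>p" and y="y\<^sub>k"] .
    have v1: "g y\<^sub>p - g y\<^sub>k - \<mu> *\<^sub>R (y\<^sub>p - y\<^sub>k) = L *\<^sub>R (p' - k' - q *\<^sub>R u)"
      unfolding gk gp mu Ueq u_def[symmetric] by (simp add: algebra_simps)
    have n1: "norm (L *\<^sub>R (p' - k' - q *\<^sub>R u)) = L * norm (p' - k' - q *\<^sub>R u)" using L by simp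
    have i1: "g y\<^sub>k \<bullet> (y\<^sub>p - y\<^sub>k) = L*(k' \<bullet> u)" unfolding gk Ueq u_def[symmetric] by simp
    show ?thesis using h unfolding v1 n1 i1 c1 unfolding Ueq u_def[symmetric] mu by linarith
  qed
  have I2: "0 \<le> f x\<^sub>s - f y\<^sub>k + L*(k' \<bullet> Yv) - q*L/2*(norm Yv)\<^sup>2 - L/(2*(1-q))*(norm (k' - q *\<^sub>R Yv))\<^sup>2"
  proof -
    have h: "f y\<^sub>k + g y\<^sub>k \<bullet> (x\<^sub>s - y\<^sub>k) + \<mu>/2 * (norm (x\<^sub>s - y\<^sub>k))\<^sup>2
           + 1/(2*(L-\<mu>)) * (norm (g x\<^sub>s - g y\<^sub>k - \<mu> *\<^sub>R (x\<^sub>s - y\<^sub>k)))\<^sup>2 \<le> f x\<^sub>s"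
      using interp[OF m assms(4), where x="x\<^sub>s" and y="y\<^sub>k"] .
    have xy: "x\<^sub>s - y\<^sub>k = - Yv" unfolding Yv_def Yeq[symmetric] by simp
    have v1: "g x\<^sub>s - g y\<^sub>k - \<mu> *\<^sub>R (x\<^sub>s - y\<^sub>k) = - (L *\<^sub>R (k' - q *\<^sub>R Yv))"
      unfolding gk gz mu xy by (simp add: algebra_simps)
    have n1: "norm (- (L *\<^sub>R (k' - q *\<^sub>R Yv))) = L * norm (k' - q *\<^sub>R Yv)" using L by simp
    have i1: "g y\<^sub>k \<bullet> (x\<^sub>s - y\<^sub>k) = - (L*(k' \<bullet> Yv))" unfolding gk xy by simp
    have n2: "norm (x\<^sub>s - y\<^sub>k) = norm Yv" unfolding xy by simp
    show ?thesis using h unfolding v1 n1 i1 c1 n2 unfolding mu by linarith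
  qed
  note KQ0 = keyQ[OF R2 R3, where e=e and v=v and k=k' and p=p']
  have KQ: "2*(1-q)*((1-q)*A\<^sub>k\<^sub>1*(- 1/2*(norm k')\<^sup>2) - q*A\<^sub>k\<^sub>1/2*(norm (Yv - k'))\<^sup>2) + 2*(1-q)*(1+q*A\<^sub>k\<^sub>1)*(norm (z\<^sub>k\<^sub>1 - x\<^sub>s))\<^sup>2
       - 2*(1-q)*((1-q)*A\<^sub>k*(- 1/2*(norm p')\<^sup>2) - q*A\<^sub>k/2*(norm (e + v))\<^sup>2 + (1+q*A\<^sub>k)*(norm e)\<^sup>2)
       + 2*(1-q)*(1-q)*A\<^sub>k*(- (k' \<bullet> u) - q/2*(norm u)\<^sup>2) - (1-q)*A\<^sub>k*(norm (p' - k' - q *\<^sub>R u))\<^sup>2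
       + 2*(1-q)*(1-q)*(A\<^sub>k\<^sub>1-A\<^sub>k)*((k' \<bullet> Yv) - q/2*(norm Yv)\<^sup>2) - (1-q)*(A\<^sub>k\<^sub>1-A\<^sub>k)*(norm (k' - q *\<^sub>R Yv))\<^sup>2 = 0"
    using KQ0 unfolding u_def[symmetric] unfolding Yv_def[symmetric] unfolding Zeq[symmetric] R1 .
  have P1: "phi \<mu> L f g x\<^sub>s A\<^sub>k\<^sub>1 y\<^sub>k z\<^sub>k\<^sub>1 = (1-q)*A\<^sub>k\<^sub>1*(f y\<^sub>k - f x\<^sub>s - L/2*(norm k')\<^sup>2 - q*L/(2*(1-q))*(norm (Yv - k'))\<^sup>2) + (L+q*L*A\<^sub>k\<^sub>1)*(norm (z\<^sub>k\<^sub>1 - x\<^sub>s))\<^sup>2"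
  proof -
    have a1: "y\<^sub>k - (1/L) *\<^sub>R g y\<^sub>k - x\<^sub>s = Yv - k'" unfolding Yv_def Yeq[symmetric] gk using L0 by (simp add: algebra_simps)
    have a2: "1/(2*L)*(norm (g y\<^sub>k))\<^sup>2 = L/2*(norm k')\<^sup>2" unfolding gk using L by (simp add: power2_eq_square)
    show ?thesis unfolding phi_def mq a1 a2 unfolding mu by simp
  qed
  have P0: "phi \<mu> L f g x\<^sub>s A\<^sub>k y\<^sub>p z\<^sub>k = (1-q)*A\<^sub>k*(f y\<^sub>p - f x\<^sub>s - L/2*(norm p')\<^sup>2 - q*L/(2*(1-q))*(norm (e + v))\<^sup>2) + (L+q*L*A\<^sub>k)*(norm e)\<^sup>2"
  proof -
    have a1: "y\<^sub>p - (1/L) *\<^sub>R g y\<^sub>p - x\<^sub>s = e + v" unfolding v_def by simp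
    have a2: "1/(2*L)*(norm (g y\<^sub>p))\<^sup>2 = L/2*(norm p')\<^sup>2" unfolding gp using L by (simp add: power2_eq_square)
    show ?thesis unfolding phi_def mq a1 a2 e_def[symmetric] unfolding mu by simp
  qed
  show ?thesis unfolding P1 P0 using fin2[OF L q(2) assms(6) A1ge I1 I2 KQ] .
qed

end
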